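(* For $k \geq 1$, assume $\mathbf{z}_{k-1} \in \hat{Z}_{k-1} = \{\hat{\mathbf{G}}_{k-1}, \hat{\mathbf{c}}_{k-1}, \hat{\mathbf{A}}_{k-1}, \hat{\mathbf{b}}_{k-1}\}$ and $\mathbf{w}_{k-1}, \mathbf{w}_k \in W = \{\mathbf{G}_w, \mathbf{c}_w, \mathbf{A}_w, \mathbf{b}_w\}$. Consider the transformed descriptor system $\tilde{\mathbf{z}}_k = \tilde{\mathbf{A}} \mathbf{z}_{k-1} + \tilde{\mathbf{B}} \mathbf{u}_{k-1} + \tilde{\mathbf{B}}_w \mathbf{w}_{k-1}$, $\mathbf{0} = \check{\mathbf{A}} \mathbf{z}_{k-1} + \check{\mathbf{B}} \mathbf{u}_{k-1} + \check{\mathbf{B}}_w \mathbf{w}_{k-1}$, $\mathbf{y}_k = \mathbf{C}\mathbf{T}\mathbf{z}_k + \mathbf{D}\mathbf{u}_k + \mathbf{D}_v \mathbf{v}_k$. If there exists a known constrained zonotope $X_a = \{\mathbf{G}_a, \mathbf{c}_a, \mathbf{A}_a, \mathbf{b}_a\} \subset \mathbb{R}^n$ with $\mathbf{x}_k \in X_a$ for all $k \geq 0$, then $\mathbf{z}_k \in \bar{Z}_k = \{\bar{\mathbf{G}}_k, \bar{\mathbf{c}}_k, \bar{\mathbf{A}}_k, \bar{\mathbf{b}}_k\}$, with \[ \bar{\mathbf{G}}_k = \begin{bmatrix} \tilde{\mathbf{A}} \hat{\mathbf{G}}_{k-1} & \tilde{\mathbf{B}}_w \mathbf{G}_w & \mathbf{0}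 & \mathbf{0}\\ \mathbf{0} & \mathbf{0} & \check{\mathbf{G}}_a & \mathbf{0}\end{bmatrix},\quad \bar{\mathbf{c}}_k = \begin{bmatrix} \tilde{\mathbf{A}} \hat{\mathbf{c}}_{k-1} + \tilde{\mathbf{B}} \mathbf{u}_{k-1} + \tilde{\mathbf{B}}_w \mathbf{c}_w \\ \check{\mathbf{c}}_a\end{bmatrix}, \] \[ \bar{\mathbf{A}}_k = \begin{bmatrix} \mathrm{blkdiag}(\hat{\mathbf{A}}_{k-1}, \mathbf{A}_w, \mathbf{A}_a, \mathbf{A}_w) \\ \begin{bmatrix} \check{\mathbf{A}} \begin{bmatrix} \tilde{\mathbf{A}} \hat{\mathbf{G}}_{k-1} \\ \mathbf{0} \end{bmatrix} & \check{\mathbf{A}} \begin{bmatrix} \tilde{\mathbf{B}}_w \mathbf{G}_w \\ \mathbf{0} \end{bmatrix} & \check{\mathbf{A}} \begin{bmatrix} \mathbf{0} \\ \check{\mathbf{G}}_a \end{bmatrix} & \check{\mathbf{B}}_w \mathbf{G}_w \end{bmatrix} \end{bmatrix}, \] (the first block row is the block-diagonal matrix spanning all four column blocks, the second block row is the given row of four blocks), \[ \bar{\mathbf{b}}_k = \begin{bmatrix} [\hat{\mathbf{b}}_{k-1}^T \;\; \mathbf{b}_w^T \;\; \mathbf{b}_a^T \;\; \mathbf{b}_w^T]^T \\ -\check{\mathbf{A}} \begin{bmatrix} \tilde{\mathbf{A}} \hat{\mathbf{c}}_{k-1} + \tilde{\mathbf{B}} \mathbf{u}_{k-1} + \tilde{\mathbf{B}}_w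 \mathbf{c}_w \\ \check{\mathbf{c}}_a\end{bmatrix} - \check{\mathbf{B}} \mathbf{u}_k - \check{\mathbf{B}}_w \mathbf{c}_w \end{bmatrix}. \]
   Context: A constrained zonotope is $Z = \{\mathbf{G}_z,\mathbf{c}_z,\mathbf{A}_z,\mathbf{b}_z\} = \{\mathbf{c}_z + \mathbf{G}_z\boldsymbol{\xi} : \|\boldsymbol{\xi}\|_\infty \le 1,\ \mathbf{A}_z\boldsymbol{\xi} = \mathbf{b}_z\}$. Consider the linear discrete-time descriptor system $\mathbf{E}\mathbf{x}_k = \mathbf{A}\mathbf{x}_{k-1} + \mathbf{B}\mathbf{u}_{k-1} + \mathbf{B}_w\mathbf{w}_{k-1}$, $\mathbf{y}_k = \mathbf{C}\mathbf{x}_k + \mathbf{D}\mathbf{u}_k + \mathbf{D}_v\mathbf{v}_k$ with $\mathbf{E} \in \mathbb{R}^{n\times n}$ possibly singular. Let $\mathbf{E} = \mathbf{U}\boldsymbol{\Sigma}\mathbf{V}^T$ be an SVD with $\boldsymbol{\Sigma} = \mathrm{blkdiag}(\tilde{\boldsymbol{\Sigma}},\mathbf{0})$, $\tilde{\boldsymbol{\Sigma}} \in \mathbb{R}^{n_z\times n_z}$ diagonal containing the $n_z = \mathrm{rank}(\mathbf{E})$ nonzero singular values, $\mathbf{T} = (\mathbf{V}^T)^{-1}$, and $\mathbf{z}_k = (\tilde{\mathbf{z}}_k,\check{\mathbf{z}}_k) = \mathbf{T}^{-1}\mathbf{x}_k$ with $\tilde{\mathbf{z}}_k \in \mathbb{R}^{n_z}$.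 The matrices are defined by $[\tilde{\mathbf{A}};\check{\mathbf{A}}] = \mathrm{blkdiag}(\tilde{\boldsymbol{\Sigma}}^{-1},\mathbf{I})\mathbf{U}^{-1}\mathbf{A}\mathbf{T}$, $[\tilde{\mathbf{B}};\check{\mathbf{B}}] = \mathrm{blkdiag}(\tilde{\boldsymbol{\Sigma}}^{-1},\mathbf{I})\mathbf{U}^{-1}\mathbf{B}$, $[\tilde{\mathbf{B}}_w;\check{\mathbf{B}}_w] = \mathrm{blkdiag}(\tilde{\boldsymbol{\Sigma}}^{-1},\mathbf{I})\mathbf{U}^{-1}\mathbf{B}_w$, where tilde-blocks have $n_z$ rows. The static relation $\mathbf{0} = \check{\mathbf{A}}\mathbf{z} + \check{\mathbf{B}}\mathbf{u} + \check{\mathbf{B}}_w\mathbf{w}$ is shifted forward to hold at time $k$, i.e. $\check{\mathbf{A}}\mathbf{z}_k + \check{\mathbf{B}}\mathbf{u}_k + \check{\mathbf{B}}_w\mathbf{w}_k = \mathbf{0}$. With $Z_a = \mathbf{T}^{-1}X_a = \{\mathbf{T}^{-1}\mathbf{G}_a,\mathbf{T}^{-1}\mathbf{c}_a,\mathbf{A}_a,\mathbf{b}_a\}$, write $\mathbf{T}^{-1}\mathbf{c}_a = [\tilde{\mathbf{c}}_a^T\ \check{\mathbf{c}}_a^T]^T$ and $\mathbf{T}^{-1}\mathbf{G}_a = [\tilde{\mathbf{G}}_a^T\ \check{\mathbf{G}}_a^T]^T$ (split conformally with $(\tilde{\mathbf{z}},\check{\mathbf{z}})$). *)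

theory Defs
  imports "Jordan_Normal_Form.Matrix"
begin

definition cz :: "real mat \<Rightarrow> real vec \<Rightarrow> real mat \<Rightarrow> real vec \<Rightarrow> real vec set" where
  "cz G c Ac b = {c + G *\<^sub>v xi | xi. xi \<in> carrier_vec (dim_col G) \<and>
       (\<forall>i < dim_col G. \<bar>xi $ i\<bar> \<le> 1) \<and> Ac *\<^sub>v xi = b}"

definition hcat :: "real mat \<Rightarrow> real mat \<Rightarrow> real mat" where
  "hcat A B = four_block_mat A B (0\<^sub>m 0 (dim_col A)) (0\<^sub>m 0 (dim_col B))"

definition vcat :: "real mat \<Rightarrow> real mat \<Rightarrow> real mat" where
  "vcat A B = four_block_mat A (0\<^sub>m (dim_row A) 0) B (0\<^sub>m (dim_row B) 0)"

definition blkdiag :: "real mat \<Rightarrow> real mat \<Rightarrow> real mat" where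
  "blkdiag A B = four_block_mat A (0\<^sub>m (dim_row A) (dim_col B)) (0\<^sub>m (dim_row B) (dim_col A)) B"

definition top_rows :: "nat \<Rightarrow> real mat \<Rightarrow> real mat" where
  "top_rows r M = mat r (dim_col M) (\<lambda>(i,j). M $$ (i,j))"

definition bot_rows :: "nat \<Rightarrow> real mat \<Rightarrow> real mat" where
  "bot_rows r M = mat (dim_row M - r) (dim_col M) (\<lambda>(i,j). M $$ (r + i, j))"

end

theory Submission imports Defs begin

lemma zero_mat_mult_vec[simp]: "v \<in> carrier_vec c \<Longrightarrow> (0\<^sub>m r c :: real mat) *\<^sub>v v = 0\<^sub>v r"
  by (intro eq_vecI) auto

lemma append_empty_vec: "w \<in> carrier_vec 0 \<Longrightarrow> (v::real vec) @\<^sub>v w = v"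
  by (intro eq_vecI) auto

lemma hcat_carrier[simp]: "A \<in> carrier_mat r c1 \<Longrightarrow> B \<in> carrier_mat r c2 \<Longrightarrow> hcat A B \<in> carrier_mat r (c1 + c2)"
  unfolding hcat_def using four_block_carrier_mat[of A r c1 "0\<^sub>m 0 c2" 0 c2] by auto

lemma vcat_carrier[simp]: "A \<in> carrier_mat r1 c \<Longrightarrow> B \<in> carrier_mat r2 c \<Longrightarrow> vcat A B \<in> carrier_mat (r1 + r2) c"
  unfolding vcat_def using four_block_carrier_mat[of A r1 c "0\<^sub>m r2 0" r2 0] by auto

lemma blkdiag_carrier[simp]: "A \<in> carrier_mat r1 c1 \<Longrightarrow> B \<in> carrier_mat r2 c2 \<Longrightarrow> blkdiag A B \<in> carrier_mat (r1 + r2) (c1 + c2)"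
  unfolding blkdiag_def using four_block_carrier_mat[of A r1 c1 B r2 c2] by auto

lemma hcat_mult_vec: "A \<in> carrier_mat r c1 \<Longrightarrow> B \<in> carrier_mat r c2 \<Longrightarrow> a \<in> carrier_vec c1 \<Longrightarrow> b \<in> carrier_vec c2
  \<Longrightarrow> hcat A B *\<^sub>v (a @\<^sub>v b) = A *\<^sub>v a + B *\<^sub>v b"
proof -
  assume a: "A \<in> carrier_mat r c1" "B \<in> carrier_mat r c2" "a \<in> carrier_vec c1" "b \<in> carrier_vec c2"
  have "hcat A B = four_block_mat A B (0\<^sub>m 0 c1) (0\<^sub>m 0 c2)" unfolding hcat_def using a by auto
  also have "\<dots> *\<^sub>v (a @\<^sub>v b) = (A *\<^sub>v a + B *\<^sub>v b) @\<^sub>v (0\<^sub>m 0 c1 *\<^sub>v a + 0\<^sub>m 0 c2 *\<^sub>v b)"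
    by (rule four_block_mat_mult_vec) (use a in auto)
  moreover have "0\<^sub>m 0 c1 *\<^sub>v a + 0\<^sub>m 0 c2 *\<^sub>v b \<in> carrier_vec 0" using a by auto
  ultimately show ?thesis by (simp add: append_empty_vec)
qed

lemma vcat_mult_vec: "A \<in> carrier_mat r1 c \<Longrightarrow> B \<in> carrier_mat r2 c \<Longrightarrow> x \<in> carrier_vec c
  \<Longrightarrow> vcat A B *\<^sub>v x = A *\<^sub>v x @\<^sub>v B *\<^sub>v x"
proof -
  assume a: "A \<in> carrier_mat r1 c" "B \<in> carrier_mat r2 c" "x \<in> carrier_vec c"
  have x: "x = x @\<^sub>v 0\<^sub>v 0" by (rule sym, rule append_empty_vec) auto
  have "vcat A B = four_block_mat A (0\<^sub>m r1 0) B (0\<^sub>m r2 0)" unfolding vcat_def using a by auto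
  also have "\<dots> *\<^sub>v (x @\<^sub>v 0\<^sub>v 0) = (A *\<^sub>v x + 0\<^sub>m r1 0 *\<^sub>v 0\<^sub>v 0) @\<^sub>v (B *\<^sub>v x + 0\<^sub>m r2 0 *\<^sub>v 0\<^sub>v 0)"
    by (rule four_block_mat_mult_vec) (use a in auto)
  finally show ?thesis using a x by auto
qed

lemma blkdiag_mult_vec: "A \<in> carrier_mat r1 c1 \<Longrightarrow> B \<in> carrier_mat r2 c2 \<Longrightarrow> a \<in> carrier_vec c1 \<Longrightarrow> b \<in> carrier_vec c2
  \<Longrightarrow> blkdiag A B *\<^sub>v (a @\<^sub>v b) = A *\<^sub>v a @\<^sub>v B *\<^sub>v b"
  unfolding blkdiag_def
  by (subst four_block_mat_mult_vec[of A r1 c1 _ c2 _ r2], auto)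

lemma bot_rows_carrier[simp]: "M \<in> carrier_mat r c \<Longrightarrow> bot_rows m M \<in> carrier_mat (r - m) c"
  unfolding bot_rows_def by auto
lemma top_rows_carrier[simp]: "M \<in> carrier_mat r c \<Longrightarrow> top_rows m M \<in> carrier_mat m c"
  unfolding top_rows_def by auto

lemma vec_last_mult: "M \<in> carrier_mat r c \<Longrightarrow> m \<le> r \<Longrightarrow> x \<in> carrier_vec c \<Longrightarrow>
   vec_last (M *\<^sub>v x) (r - m) = bot_rows m M *\<^sub>v x"
  unfolding bot_rows_def vec_last_def
  by (intro eq_vecI) (auto simp: row_def intro!: arg_cong[where f="\<lambda>v. v \<bullet> x"] eq_vecI)

lemma append_assoc_vec: "((a::real vec) @\<^sub>v b) @\<^sub>v c = a @\<^sub>v (b @\<^sub>v c)"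
  by (intro eq_vecI) auto

lemma hcat4_mult_vec:
  assumes "A1 \<in> carrier_mat r c1" "A2 \<in> carrier_mat r c2" "A3 \<in> carrier_mat r c3" "A4 \<in> carrier_mat r c4"
    "x1 \<in> carrier_vec c1" "x2 \<in> carrier_vec c2" "x3 \<in> carrier_vec c3" "x4 \<in> carrier_vec c4"
  shows "hcat (hcat (hcat A1 A2) A3) A4 *\<^sub>v (((x1 @\<^sub>v x2) @\<^sub>v x3) @\<^sub>v x4)
    = A1 *\<^sub>v x1 + A2 *\<^sub>v x2 + A3 *\<^sub>v x3 + A4 *\<^sub>v x4"
proof -
  have c12: "hcat A1 A2 \<in> carrier_mat r (c1 + c2)" using assms by simp
  have c123: "hcat (hcat A1 A2) A3 \<in> carrier_mat r (c1 + c2 + c3)" using hcat_carrier[OF c12 assms(3)] .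
  have v12: "x1 @\<^sub>v x2 \<in> carrier_vec (c1 + c2)" using assms by simp
  have v123: "(x1 @\<^sub>v x2) @\<^sub>v x3 \<in> carrier_vec (c1 + c2 + c3)" using append_carrier_vec[OF v12 assms(7)] .
  show ?thesis
    unfolding hcat_mult_vec[OF c123 assms(4) v123 assms(8)] hcat_mult_vec[OF c12 assms(3) v12 assms(7)]
      hcat_mult_vec[OF assms(1,2,5,6)] ..
qed

lemma blkdiag4_mult_vec:
  assumes "A1 \<in> carrier_mat r1 c1" "A2 \<in> carrier_mat r2 c2" "A3 \<in> carrier_mat r3 c3" "A4 \<in> carrier_mat r4 c4"
    "x1 \<in> carrier_vec c1" "x2 \<in> carrier_vec c2" "x3 \<in> carrier_vec c3" "x4 \<in> carrier_vec c4"
  shows "blkdiag (blkdiag (blkdiag A1 A2) A3) A4 *\<^sub>v (((x1 @\<^sub>v x2) @\<^sub>v x3) @\<^sub>v x4)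
    = ((A1 *\<^sub>v x1 @\<^sub>v A2 *\<^sub>v x2) @\<^sub>v A3 *\<^sub>v x3) @\<^sub>v A4 *\<^sub>v x4"
proof -
  have c12: "blkdiag A1 A2 \<in> carrier_mat (r1 + r2) (c1 + c2)" using assms by simp
  have c123: "blkdiag (blkdiag A1 A2) A3 \<in> carrier_mat (r1 + r2 + r3) (c1 + c2 + c3)" using blkdiag_carrier[OF c12 assms(3)] .
  have v12: "x1 @\<^sub>v x2 \<in> carrier_vec (c1 + c2)" using assms by simp
  have v123: "(x1 @\<^sub>v x2) @\<^sub>v x3 \<in> carrier_vec (c1 + c2 + c3)" using append_carrier_vec[OF v12 assms(7)] .
  show ?thesis
    unfolding blkdiag_mult_vec[OF c123 assms(4) v123 assms(8)] blkdiag_mult_vec[OF c12 assms(3) v12 assms(7)]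
      blkdiag_mult_vec[OF assms(1,2,5,6)] ..
qed

theorem lemma1:
  fixes E A B Bw C D Dv U Uinv V Sig Sinv T Tinv :: "real mat"
    and Ga Aa Gh Ah Gw Aw :: "real mat"
    and ca ba ch bh cw bw :: "real vec"
    and x z u w v y :: "nat \<Rightarrow> real vec"
    and n nz nu nw ny nv k nga nca ngh nch ngw ncw :: nat
    and At Ac Bt Bc Bwt Bwc Gac :: "real mat" and cac :: "real vec"
  assumes dims: "E \<in> carrier_mat n n" "A \<in> carrier_mat n n" "B \<in> carrier_mat n nu"
      "Bw \<in> carrier_mat n nw" "C \<in> carrier_mat ny n" "D \<in> carrier_mat ny nu"
      "Dv \<in> carrier_mat ny nv"
    \<comment> \<open>SVD of E: E = U Sigma V^T, Sigma = blkdiag(Sig, 0), Sig diagonal with the nz nonzero singular values\<close>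
    and svd: "nz \<le> n" "U \<in> carrier_mat n n" "V \<in> carrier_mat n n"
      "transpose_mat U * U = 1\<^sub>m n" "U * transpose_mat U = 1\<^sub>m n"
      "transpose_mat V * V = 1\<^sub>m n" "V * transpose_mat V = 1\<^sub>m n"
      "Sig \<in> carrier_mat nz nz" "diagonal_mat Sig" "\<forall>i<nz. Sig $$ (i,i) > 0"
      "E = U * blkdiag Sig (0\<^sub>m (n - nz) (n - nz)) * transpose_mat V"
    and inverses: "Uinv \<in> carrier_mat n n" "Uinv * U = 1\<^sub>m n" "U * Uinv = 1\<^sub>m n"
      "Sinv \<in> carrier_mat nz nz" "Sinv * Sig = 1\<^sub>m nz" "Sig * Sinv = 1\<^sub>m nz"
      "T \<in> carrier_mat n n" "T * transpose_mat V = 1\<^sub>m n" "transpose_mat V * T = 1\<^sub>m n"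
      "Tinv \<in> carrier_mat n n" "Tinv * T = 1\<^sub>m n" "T * Tinv = 1\<^sub>m n"
    \<comment> \<open>transformed system matrices\<close>
    defines "At \<equiv> top_rows nz (blkdiag Sinv (1\<^sub>m (n - nz)) * Uinv * A * T)"
      and "Ac \<equiv> bot_rows nz (blkdiag Sinv (1\<^sub>m (n - nz)) * Uinv * A * T)"
      and "Bt \<equiv> top_rows nz (blkdiag Sinv (1\<^sub>m (n - nz)) * Uinv * B)"
      and "Bc \<equiv> bot_rows nz (blkdiag Sinv (1\<^sub>m (n - nz)) * Uinv * B)"
      and "Bwt \<equiv> top_rows nz (blkdiag Sinv (1\<^sub>m (n - nz)) * Uinv * Bw)"
      and "Bwc \<equiv> bot_rows nz (blkdiag Sinv (1\<^sub>m (n - nz)) * Uinv * Bw)"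
      and "Gac \<equiv> bot_rows nz (Tinv * Ga)"
      and "cac \<equiv> vec_last (Tinv *\<^sub>v ca) (n - nz)"
  assumes sets: "Ga \<in> carrier_mat n nga" "ca \<in> carrier_vec n" "Aa \<in> carrier_mat nca nga"
      "ba \<in> carrier_vec nca"
      "Gh \<in> carrier_mat n ngh" "ch \<in> carrier_vec n" "Ah \<in> carrier_mat nch ngh"
      "bh \<in> carrier_vec nch"
      "Gw \<in> carrier_mat nw ngw" "cw \<in> carrier_vec nw" "Aw \<in> carrier_mat ncw ngw"
      "bw \<in> carrier_vec ncw"
    and signals: "\<forall>j. u j \<in> carrier_vec nu" "\<forall>j. w j \<in> carrier_vec nw"
      "\<forall>j. v j \<in> carrier_vec nv" "\<forall>j. z j \<in> carrier_vec n"
    \<comment> \<open>change of coordinates z = T^{-1} x\<close>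
      "\<forall>j. z j = Tinv *\<^sub>v x j"
    \<comment> \<open>transformed descriptor system\<close>
    and sys: "\<forall>j\<ge>1. vec_first (z j) nz = At *\<^sub>v z (j - 1) + Bt *\<^sub>v u (j - 1) + Bwt *\<^sub>v w (j - 1)"
      "\<forall>j\<ge>1. 0\<^sub>v (n - nz) = Ac *\<^sub>v z (j - 1) + Bc *\<^sub>v u (j - 1) + Bwc *\<^sub>v w (j - 1)"
      "\<forall>j. y j = (C * T) *\<^sub>v z j + D *\<^sub>v u j + Dv *\<^sub>v v j"
    \<comment> \<open>static relation shifted forward to time k\<close>
      "Ac *\<^sub>v z k + Bc *\<^sub>v u k + Bwc *\<^sub>v w k = 0\<^sub>v (n - nz)"
    and k: "k \<ge> 1"
    and prev: "z (k - 1) \<in> cz Gh ch Ah bh"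
    and noise: "w (k - 1) \<in> cz Gw cw Aw bw" "w k \<in> cz Gw cw Aw bw"
    and Xa: "\<forall>j. x j \<in> cz Ga ca Aa ba"
  shows "z k \<in> cz
     (vcat (hcat (hcat (hcat (At * Gh) (Bwt * Gw)) (0\<^sub>m nz nga)) (0\<^sub>m nz ngw))
           (hcat (hcat (hcat (0\<^sub>m (n - nz) ngh) (0\<^sub>m (n - nz) ngw)) Gac) (0\<^sub>m (n - nz) ngw)))
     ((At *\<^sub>v ch + Bt *\<^sub>v u (k - 1) + Bwt *\<^sub>v cw) @\<^sub>v cac)
     (vcat (blkdiag (blkdiag (blkdiag Ah Aw) Aa) Aw)
           (hcat (hcat (hcat (Ac * vcat (At * Gh) (0\<^sub>m (n - nz) ngh))
                             (Ac * vcat (Bwt * Gw) (0\<^sub>m (n - nz) ngw)))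
                       (Ac * vcat (0\<^sub>m nz nga) Gac))
                 (Bwc * Gw)))
     ((bh @\<^sub>v bw @\<^sub>v ba @\<^sub>v bw) @\<^sub>v
        (- (Ac *\<^sub>v ((At *\<^sub>v ch + Bt *\<^sub>v u (k - 1) + Bwt *\<^sub>v cw) @\<^sub>v cac))
         - Bc *\<^sub>v u k - Bwc *\<^sub>v cw))"
proof -
  have nzn: "nz + (n - nz) = n" using svd(1) by simp
  have M0: "blkdiag Sinv (1\<^sub>m (n - nz)) \<in> carrier_mat n n"
    using blkdiag_carrier[OF inverses(4), of "1\<^sub>m (n - nz)" "n - nz" "n - nz"] nzn by simp
  have AtC: "At \<in> carrier_mat nz n" unfolding At_def using M0 inverses dims by (intro top_rows_carrier) auto
  have AcC: "Ac \<in> carrier_mat (n - nz) n" unfolding Ac_def using M0 inverses dims by (intro bot_rows_carrier) auto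
  have BtC: "Bt \<in> carrier_mat nz nu" unfolding Bt_def using M0 inverses dims by (intro top_rows_carrier) auto
  have BcC: "Bc \<in> carrier_mat (n - nz) nu" unfolding Bc_def using M0 inverses dims by (intro bot_rows_carrier) auto
  have BwtC: "Bwt \<in> carrier_mat nz nw" unfolding Bwt_def using M0 inverses dims by (intro top_rows_carrier) auto
  have BwcC: "Bwc \<in> carrier_mat (n - nz) nw" unfolding Bwc_def using M0 inverses dims by (intro bot_rows_carrier) auto
  have GacC: "Gac \<in> carrier_mat (n - nz) nga" unfolding Gac_def using inverses sets by (intro bot_rows_carrier) auto
  have cacC: "cac \<in> carrier_vec (n - nz)" unfolding cac_def by simp
  obtain \<xi>1 where x1: "\<xi>1 \<in> carrier_vec ngh" "\<forall>i<ngh. \<bar>\<xi>1 $ i\<bar> \<le> 1" "Ah *\<^sub>v \<xi>1 = bh"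
      "z (k - 1) = ch + Gh *\<^sub>v \<xi>1"
    using prev sets unfolding cz_def by auto
  obtain \<xi>2 where x2: "\<xi>2 \<in> carrier_vec ngw" "\<forall>i<ngw. \<bar>\<xi>2 $ i\<bar> \<le> 1" "Aw *\<^sub>v \<xi>2 = bw"
      "w (k - 1) = cw + Gw *\<^sub>v \<xi>2"
    using noise(1) sets unfolding cz_def by auto
  obtain \<xi>4 where x4: "\<xi>4 \<in> carrier_vec ngw" "\<forall>i<ngw. \<bar>\<xi>4 $ i\<bar> \<le> 1" "Aw *\<^sub>v \<xi>4 = bw"
      "w k = cw + Gw *\<^sub>v \<xi>4"
    using noise(2) sets unfolding cz_def by auto
  obtain \<xi>3 where x3: "\<xi>3 \<in> carrier_vec nga" "\<forall>i<nga. \<bar>\<xi>3 $ i\<bar> \<le> 1" "Aa *\<^sub>v \<xi>3 = ba"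
      "x k = ca + Ga *\<^sub>v \<xi>3"
    using Xa sets unfolding cz_def by blast
  let ?c1 = "At *\<^sub>v ch + Bt *\<^sub>v u (k - 1) + Bwt *\<^sub>v cw"
  let ?t = "(At * Gh) *\<^sub>v \<xi>1 + (Bwt * Gw) *\<^sub>v \<xi>2"
  let ?g3 = "Gac *\<^sub>v \<xi>3"
  have uk1: "u (k - 1) \<in> carrier_vec nu" "u k \<in> carrier_vec nu" using signals by auto
  have F1: "vec_first (z k) nz = ?c1 + ?t"
  proof -
    have "vec_first (z k) nz = At *\<^sub>v z (k - 1) + Bt *\<^sub>v u (k - 1) + Bwt *\<^sub>v w (k - 1)"
      using sys(1) k by auto
    also have "\<dots> = At *\<^sub>v ch + At *\<^sub>v (Gh *\<^sub>v \<xi>1) + Bt *\<^sub>v u (k - 1) + (Bwt *\<^sub>v cw + Bwt *\<^sub>v (Gw *\<^sub>v \<xi>2))"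
      unfolding x1(4) x2(4)
      using AtC BwtC sets x1 x2 by (simp add: mult_add_distrib_mat_vec[of _ nz n] mult_add_distrib_mat_vec[of _ nz nw])
    also have "\<dots> = ?c1 + ?t"
      using AtC BwtC BtC sets x1 x2 uk1 by (intro eq_vecI) auto
    finally show ?thesis .
  qed
  have F2: "vec_last (z k) (n - nz) = cac + ?g3"
  proof -
    have "z k = Tinv *\<^sub>v ca + (Tinv * Ga) *\<^sub>v \<xi>3"
      using signals(5) x3 inverses sets by (simp add: mult_add_distrib_mat_vec[of _ n n])
    hence "vec_last (z k) (n - nz) = vec_last (Tinv *\<^sub>v ca) (n - nz) + vec_last ((Tinv * Ga) *\<^sub>v \<xi>3) (n - nz)"
      using inverses sets x3 unfolding vec_last_def by (intro eq_vecI) auto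
    also have "vec_last ((Tinv * Ga) *\<^sub>v \<xi>3) (n - nz) = ?g3"
      unfolding Gac_def using inverses sets x3 svd(1) by (intro vec_last_mult[of _ n nga]) auto
    finally show ?thesis unfolding cac_def .
  qed
  have zkC: "z k \<in> carrier_vec (nz + (n - nz))" using signals(4) nzn by simp
  have F3: "z k = (?c1 + ?t) @\<^sub>v (cac + ?g3)"
    using vec_first_last_append[OF zkC] F1 F2 by simp
  let ?G = "vcat (hcat (hcat (hcat (At * Gh) (Bwt * Gw)) (0\<^sub>m nz nga)) (0\<^sub>m nz ngw))
           (hcat (hcat (hcat (0\<^sub>m (n - nz) ngh) (0\<^sub>m (n - nz) ngw)) Gac) (0\<^sub>m (n - nz) ngw))"
  let ?xi = "((\<xi>1 @\<^sub>v \<xi>2) @\<^sub>v \<xi>3) @\<^sub>v \<xi>4"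
  have AGh: "At * Gh \<in> carrier_mat nz ngh" using AtC sets by auto
  have BGw: "Bwt * Gw \<in> carrier_mat nz ngw" using BwtC sets by auto
  have xiC: "?xi \<in> carrier_vec (ngh + ngw + nga + ngw)" using x1 x2 x3 x4 by auto
  have GC: "?G \<in> carrier_mat (nz + (n - nz)) (ngh + ngw + nga + ngw)"
    using AGh BGw GacC by (intro vcat_carrier hcat_carrier) auto
  have top: "hcat (hcat (hcat (At * Gh) (Bwt * Gw)) (0\<^sub>m nz nga)) (0\<^sub>m nz ngw) *\<^sub>v ?xi = ?t"
    using hcat4_mult_vec[OF AGh BGw _ _ x1(1) x2(1) x3(1) x4(1), of "0\<^sub>m nz nga" "0\<^sub>m nz ngw"] x3 x4 AGh BGw x1 x2 by simp
  have bot: "hcat (hcat (hcat (0\<^sub>m (n - nz) ngh) (0\<^sub>m (n - nz) ngw)) Gac) (0\<^sub>m (n - nz) ngw) *\<^sub>v ?xi = ?g3"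
    using hcat4_mult_vec[OF _ _ GacC _ x1(1) x2(1) x3(1) x4(1), of "0\<^sub>m (n - nz) ngh" "0\<^sub>m (n - nz) ngw" "0\<^sub>m (n - nz) ngw"] x1 x2 x4 GacC x3 by simp
  have Gxi: "?G *\<^sub>v ?xi = ?t @\<^sub>v ?g3"
    using top bot AGh BGw GacC xiC
    by (subst vcat_mult_vec[of _ nz "ngh + ngw + nga + ngw" _ "n - nz"]) (auto intro!: hcat_carrier)
  have c1C: "?c1 \<in> carrier_vec nz" using AtC BtC BwtC sets uk1 by auto
  have tC: "?t \<in> carrier_vec nz" using AGh BGw x1 x2 by auto
  have g3C: "?g3 \<in> carrier_vec (n - nz)" using GacC x3 by auto
  have eq1: "z k = (?c1 @\<^sub>v cac) + ?G *\<^sub>v ?xi"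
    unfolding Gxi F3 using append_vec_add[OF c1C tC cacC g3C] by simp
  let ?Ab = "blkdiag (blkdiag (blkdiag Ah Aw) Aa) Aw"
  let ?R = "hcat (hcat (hcat (Ac * vcat (At * Gh) (0\<^sub>m (n - nz) ngh))
                             (Ac * vcat (Bwt * Gw) (0\<^sub>m (n - nz) ngw)))
                       (Ac * vcat (0\<^sub>m nz nga) Gac))
                 (Bwc * Gw)"
  have V1: "vcat (At * Gh) (0\<^sub>m (n - nz) ngh) \<in> carrier_mat n ngh" using AGh nzn vcat_carrier[OF AGh, of "0\<^sub>m (n - nz) ngh" "n - nz"] by simp
  have V2: "vcat (Bwt * Gw) (0\<^sub>m (n - nz) ngw) \<in> carrier_mat n ngw" using BGw nzn vcat_carrier[OF BGw, of "0\<^sub>m (n - nz) ngw" "n - nz"] by simp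
  have V3: "vcat (0\<^sub>m nz nga) Gac \<in> carrier_mat n nga" using GacC nzn vcat_carrier[of "0\<^sub>m nz nga" nz nga Gac "n - nz"] by simp
  have BGw2: "Bwc * Gw \<in> carrier_mat (n - nz) ngw" using BwcC sets by auto
  have AbC: "?Ab \<in> carrier_mat (nch + ncw + nca + ncw) (ngh + ngw + nga + ngw)"
    using sets by (intro blkdiag_carrier) auto
  have RC: "?R \<in> carrier_mat (n - nz) (ngh + ngw + nga + ngw)"
    using AcC V1 V2 V3 BGw2 by (intro hcat_carrier) auto
  have Abxi: "?Ab *\<^sub>v ?xi = bh @\<^sub>v bw @\<^sub>v ba @\<^sub>v bw"
    using blkdiag4_mult_vec[OF sets(7) sets(11) sets(3) sets(11) x1(1) x2(1) x3(1) x4(1)] x1 x2 x3 x4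
    by (simp add: append_assoc_vec)
  let ?p1 = "(At * Gh) *\<^sub>v \<xi>1 @\<^sub>v 0\<^sub>v (n - nz)"
  let ?p2 = "(Bwt * Gw) *\<^sub>v \<xi>2 @\<^sub>v 0\<^sub>v (n - nz)"
  let ?p3 = "0\<^sub>v nz @\<^sub>v ?g3"
  have p1: "vcat (At * Gh) (0\<^sub>m (n - nz) ngh) *\<^sub>v \<xi>1 = ?p1"
    using AGh x1 by (simp add: vcat_mult_vec[OF AGh, of "0\<^sub>m (n - nz) ngh" "n - nz"])
  have p2: "vcat (Bwt * Gw) (0\<^sub>m (n - nz) ngw) *\<^sub>v \<xi>2 = ?p2"
    using BGw x2 by (simp add: vcat_mult_vec[OF BGw, of "0\<^sub>m (n - nz) ngw" "n - nz"])
  have p3: "vcat (0\<^sub>m nz nga) Gac *\<^sub>v \<xi>3 = ?p3"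
    using GacC x3 by (simp add: vcat_mult_vec[of "0\<^sub>m nz nga" nz nga Gac "n - nz"])
  have p1C: "?p1 \<in> carrier_vec n" using AGh x1 nzn by (metis append_carrier_vec mult_mat_vec_carrier zero_carrier_vec)
  have p2C: "?p2 \<in> carrier_vec n" using BGw x2 nzn by (metis append_carrier_vec mult_mat_vec_carrier zero_carrier_vec)
  have p3C: "?p3 \<in> carrier_vec n" using g3C nzn by (metis append_carrier_vec zero_carrier_vec)
  have ccC: "?c1 @\<^sub>v cac \<in> carrier_vec n" using c1C cacC nzn by (metis append_carrier_vec)
  have Rxi: "?R *\<^sub>v ?xi = Ac *\<^sub>v ?p1 + Ac *\<^sub>v ?p2 + Ac *\<^sub>v ?p3 + (Bwc * Gw) *\<^sub>v \<xi>4"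
  proof -
    have "?R *\<^sub>v ?xi = (Ac * vcat (At * Gh) (0\<^sub>m (n - nz) ngh)) *\<^sub>v \<xi>1 + (Ac * vcat (Bwt * Gw) (0\<^sub>m (n - nz) ngw)) *\<^sub>v \<xi>2
       + (Ac * vcat (0\<^sub>m nz nga) Gac) *\<^sub>v \<xi>3 + (Bwc * Gw) *\<^sub>v \<xi>4"
      by (rule hcat4_mult_vec[OF _ _ _ BGw2 x1(1) x2(1) x3(1) x4(1)]) (use AcC V1 V2 V3 in auto)
    also have "\<dots> = Ac *\<^sub>v ?p1 + Ac *\<^sub>v ?p2 + Ac *\<^sub>v ?p3 + (Bwc * Gw) *\<^sub>v \<xi>4"
      using AcC V1 V2 V3 x1 x2 x3 by (simp only: assoc_mult_mat_vec[OF AcC V1] assoc_mult_mat_vec[OF AcC V2] assoc_mult_mat_vec[OF AcC V3] p1 p2 p3)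
    finally show ?thesis .
  qed
  have P1C: "(At * Gh) *\<^sub>v \<xi>1 \<in> carrier_vec nz" using AGh x1 by auto
  have P2C: "(Bwt * Gw) *\<^sub>v \<xi>2 \<in> carrier_vec nz" using BGw x2 by auto
  have s1: "(?c1 @\<^sub>v cac) + ?p1 = (?c1 + (At * Gh) *\<^sub>v \<xi>1) @\<^sub>v (cac + 0\<^sub>v (n - nz))"
    using append_vec_add[OF c1C P1C cacC zero_carrier_vec] .
  have q1: "?c1 + (At * Gh) *\<^sub>v \<xi>1 \<in> carrier_vec nz" using c1C P1C by simp
  have q2: "?c1 + (At * Gh) *\<^sub>v \<xi>1 + (Bwt * Gw) *\<^sub>v \<xi>2 \<in> carrier_vec nz" using q1 P2C by simp
  have r1: "cac + 0\<^sub>v (n - nz) \<in> carrier_vec (n - nz)" using cacC by simp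
  have r2: "cac + 0\<^sub>v (n - nz) + 0\<^sub>v (n - nz) \<in> carrier_vec (n - nz)" using cacC by simp
  have s2: "((?c1 + (At * Gh) *\<^sub>v \<xi>1) @\<^sub>v (cac + 0\<^sub>v (n - nz))) + ?p2
     = (?c1 + (At * Gh) *\<^sub>v \<xi>1 + (Bwt * Gw) *\<^sub>v \<xi>2) @\<^sub>v (cac + 0\<^sub>v (n - nz) + 0\<^sub>v (n - nz))"
    by (rule append_vec_add[OF q1 P2C r1 zero_carrier_vec])
  have s3: "((?c1 + (At * Gh) *\<^sub>v \<xi>1 + (Bwt * Gw) *\<^sub>v \<xi>2) @\<^sub>v (cac + 0\<^sub>v (n - nz) + 0\<^sub>v (n - nz))) + ?p3
     = (?c1 + (At * Gh) *\<^sub>v \<xi>1 + (Bwt * Gw) *\<^sub>v \<xi>2 + 0\<^sub>v nz) @\<^sub>v (cac + 0\<^sub>v (n - nz) + 0\<^sub>v (n - nz) + ?g3)"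
    by (rule append_vec_add[OF q2 zero_carrier_vec r2 g3C])
  have e1: "?c1 + (At * Gh) *\<^sub>v \<xi>1 + (Bwt * Gw) *\<^sub>v \<xi>2 + 0\<^sub>v nz = ?c1 + ?t"
    using c1C P1C P2C by (intro eq_vecI) auto
  have e2: "cac + 0\<^sub>v (n - nz) + 0\<^sub>v (n - nz) + ?g3 = cac + ?g3"
    using cacC g3C by (intro eq_vecI) auto
  have zsplit: "z k = (?c1 @\<^sub>v cac) + ?p1 + ?p2 + ?p3"
    unfolding F3 s1 s2 s3 e1 e2 ..
  have Acz: "Ac *\<^sub>v z k = Ac *\<^sub>v (?c1 @\<^sub>v cac) + Ac *\<^sub>v ?p1 + Ac *\<^sub>v ?p2 + Ac *\<^sub>v ?p3"
    unfolding zsplit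
    by (simp only: mult_add_distrib_mat_vec[OF AcC _ p3C] mult_add_distrib_mat_vec[OF AcC _ p2C]
        mult_add_distrib_mat_vec[OF AcC ccC p1C] add_carrier_vec ccC p1C p2C)
  have wk: "Bwc *\<^sub>v w k = Bwc *\<^sub>v cw + (Bwc * Gw) *\<^sub>v \<xi>4"
    unfolding x4(4) using BwcC sets x4 by (simp add: mult_add_distrib_mat_vec[OF BwcC])
  have Rres: "?R *\<^sub>v ?xi = - (Ac *\<^sub>v (?c1 @\<^sub>v cac)) - Bc *\<^sub>v u k - Bwc *\<^sub>v cw"
  proof (rule eq_vecI)
    fix i assume i: "i < dim_vec (- (Ac *\<^sub>v (?c1 @\<^sub>v cac)) - Bc *\<^sub>v u k - Bwc *\<^sub>v cw)"
    hence i': "i < n - nz" using AcC BwcC by simp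
    have "(Ac *\<^sub>v z k + Bc *\<^sub>v u k + Bwc *\<^sub>v w k) $ i = 0" using sys(4) i' by simp
    thus "(?R *\<^sub>v ?xi) $ i = (- (Ac *\<^sub>v (?c1 @\<^sub>v cac)) - Bc *\<^sub>v u k - Bwc *\<^sub>v cw) $ i"
      unfolding Rxi Acz wk using i' AcC BcC BwcC BGw2 by simp
  qed (use RC AcC BwcC in simp)
  have Cxi: "vcat ?Ab ?R *\<^sub>v ?xi = (bh @\<^sub>v bw @\<^sub>v ba @\<^sub>v bw) @\<^sub>v
        (- (Ac *\<^sub>v (?c1 @\<^sub>v cac)) - Bc *\<^sub>v u k - Bwc *\<^sub>v cw)"
    using vcat_mult_vec[OF AbC RC xiC] Abxi Rres by simp
  have dG: "dim_col ?G = ngh + ngw + nga + ngw" using GC by simp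
  have bnd: "\<forall>i < dim_col ?G. \<bar>?xi $ i\<bar> \<le> 1"
    unfolding dG using x1 x2 x3 x4 by auto
  have xiC': "?xi \<in> carrier_vec (dim_col ?G)" unfolding dG by (rule xiC)
  show ?thesis unfolding cz_def
    apply (rule CollectI, rule exI[of _ ?xi], intro conjI)
       apply (fact eq1)
      apply (fact xiC')
     apply (fact bnd)
    apply (fact Cxi)
    done
qed
end
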